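(* Let $h$ be a positive function and $v$ a solution of $\ddot v=\frac{2}{h^2}(e^v-1)$. If $v$ has a minimum at $m$, then $v(m)\ge0$; if $v$ has a maximum at $M$, then $v(M)\le0$. Moreover, if $v$ satisfies the initial conditions $v(\delta)<0$, $\dot v(\delta)<0$ (resp. $v(\delta)>0$, $\dot v(\delta)>0$), then $v<0$ (resp. $v>0$) on $(\delta,\infty)$.
   Context: Here $v$ is a real function of $r$ (defined on $[\delta,\infty)$ for the second statement) and dots denote derivatives in $r$; minima and maxima are taken at interior points where $\dot v=0$. *)

theory Defs
  imports "HOL-Analysis.Analysis"
begin

end

theory Submission
  imports Defs
begin


lemma mvt_within:
  fixes f :: "real \<Rightarrow> real"
  assumes "a < b" "{a..b} \<subseteq> S"
    and d: "\<And>x. a \<le> x \<Longrightarrow> x \<le> b \<Longrightarrow> (f has_real_derivative f' x) (at x within S)"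
  shows "\<exists>z\<in>{a<..<b}. f b - f a = f' z * (b - a)"
proof -
  have "\<And>x. a \<le> x \<Longrightarrow> x \<le> b \<Longrightarrow> (f has_derivative (\<lambda>h. f' x * h)) (at x within {a..b})"
  proof -
    fix x assume "a \<le> x" "x \<le> b"
    then have "(f has_real_derivative f' x) (at x within {a..b})"
      using d has_field_derivative_subset assms(2) by blast
    then show "(f has_derivative (\<lambda>h. f' x * h)) (at x within {a..b})"
      by (simp add: has_field_derivative_def)
  qed
  from mvt_simple[OF assms(1) this] show ?thesis by auto
qed

lemma coef_pos: "(hh::real) > 0 \<Longrightarrow> 2 / hh^2 > 0" by simp

lemma part_min:
  fixes h :: "real \<Rightarrow> real"
  assumes hpos: "\<And>r. h r > 0"
    and U: "open U"
    and der: "\<forall>r\<in>U. (v has_real_derivative v' r) (at r) \<and>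
                (v' has_real_derivative v'' r) (at r) \<and>
                v'' r = 2 / (h r)^2 * (exp (v r) - 1)"
    and m: "m \<in> U" "v' m = 0"
    and e: "e > 0" "\<forall>x\<in>U. dist x m < e \<longrightarrow> v m \<le> v x"
  shows "v m \<ge> 0"
proof (rule ccontr)
  assume "\<not> v m \<ge> 0"
  then have "exp (v m) - 1 < 0" by simp
  moreover have "v'' m = 2/(h m)^2 * (exp (v m) - 1)" using der m by blast
  ultimately have neg: "v'' m < 0" using mult_pos_neg[OF coef_pos[OF hpos[of m]] \<open>exp (v m) - 1 < 0\<close>] by linarith
  obtain d where d: "d > 0" "\<forall>k>0. k < d \<longrightarrow> v' m > v' (m + k)"
    using DERIV_neg_dec_right[OF _ neg] der m by blast
  obtain r where r: "r > 0" "ball m r \<subseteq> U" using U m open_contains_ball by blast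
  define k where "k = min d (min e r) / 2"
  have k: "k > 0" "k < d" "k < e" "k < r" using d e r by (auto simp: k_def)
  have sub: "{m..m+k} \<subseteq> U"
  proof
    fix x assume "x \<in> {m..m+k}"
    then have "x \<in> ball m r" using k by (auto simp: dist_real_def)
    then show "x \<in> U" using r by blast
  qed
  obtain z where z: "z \<in> {m<..<m+k}" "v (m+k) - v m = v' z * (m + k - m)"
    using mvt_within[of m "m+k" UNIV v v'] k sub der by force
  have "v' z < 0" using d(2)[rule_format, of "z - m"] z k m by auto
  then have "v (m+k) < v m" using z mult_neg_pos[of "v' z" k] k by auto
  moreover have "v m \<le> v (m+k)" proof -
    have "m + k \<in> {m..m+k}" using k by simp
    then have "m + k \<in> U" using sub by blast
    then show ?thesis using e(2)[rule_format, of "m+k"] k by (simp add: dist_real_def)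
  qed
  ultimately show False by simp
qed

lemma part_max:
  fixes h :: "real \<Rightarrow> real"
  assumes hpos: "\<And>r. h r > 0"
    and U: "open U"
    and der: "\<forall>r\<in>U. (v has_real_derivative v' r) (at r) \<and>
                (v' has_real_derivative v'' r) (at r) \<and>
                v'' r = 2 / (h r)^2 * (exp (v r) - 1)"
    and m: "m \<in> U" "v' m = 0"
    and e: "e > 0" "\<forall>x\<in>U. dist x m < e \<longrightarrow> v x \<le> v m"
  shows "v m \<le> 0"
proof (rule ccontr)
  assume "\<not> v m \<le> 0"
  then have "exp (v m) - 1 > 0" by simp
  moreover have "v'' m = 2/(h m)^2 * (exp (v m) - 1)" using der m by blast
  ultimately have pos: "v'' m > 0" using mult_pos_pos[OF coef_pos[OF hpos[of m]] \<open>exp (v m) - 1 > 0\<close>] by linarith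
  obtain d where d: "d > 0" "\<forall>k>0. k < d \<longrightarrow> v' m < v' (m + k)"
    using DERIV_pos_inc_right[OF _ pos] der m by blast
  obtain r where r: "r > 0" "ball m r \<subseteq> U" using U m open_contains_ball by blast
  define k where "k = min d (min e r) / 2"
  have k: "k > 0" "k < d" "k < e" "k < r" using d e r by (auto simp: k_def)
  have sub: "{m..m+k} \<subseteq> U"
  proof
    fix x assume "x \<in> {m..m+k}"
    then have "x \<in> ball m r" using k by (auto simp: dist_real_def)
    then show "x \<in> U" using r by blast
  qed
  obtain z where z: "z \<in> {m<..<m+k}" "v (m+k) - v m = v' z * (m + k - m)"
    using mvt_within[of m "m+k" UNIV v v'] k sub der by force
  have "v' z > 0" using d(2)[rule_format, of "z - m"] z k m by auto
  then have "v' z * k > 0" using k by simp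
  then have "v (m+k) > v m" using z by simp
  moreover have "v (m+k) \<le> v m" proof -
    have "m + k \<in> {m..m+k}" using k by simp
    then have "m + k \<in> U" using sub by blast
    then show ?thesis using e(2)[rule_format, of "m+k"] k by (simp add: dist_real_def)
  qed
  ultimately show False by simp
qed

lemma part_neg:
  fixes h :: "real \<Rightarrow> real"
  assumes hpos: "\<And>r. h r > 0"
    and der: "\<forall>r\<ge>\<delta>. (v has_real_derivative v' r) (at r within {\<delta>..}) \<and>
                (v' has_real_derivative v'' r) (at r within {\<delta>..}) \<and>
                v'' r = 2 / (h r)^2 * (exp (v r) - 1)"
    and init: "v \<delta> < 0" "v' \<delta> < 0"
  shows "\<forall>r>\<delta>. v r < 0"
proof (intro allI impI, rule ccontr)
  fix r assume r: "r > \<delta>" "\<not> v r < 0"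
  define S where "S = {\<delta>..r} \<inter> v -` {0..}"
  have cont: "continuous_on {\<delta>..r} v"
  proof (rule continuous_on_subset)
    show "continuous_on {\<delta>..} v"
      using der by (auto simp: continuous_on_eq_continuous_within intro: DERIV_continuous)
  qed auto
  have clS: "closed S" unfolding S_def by (rule continuous_closed_preimage[OF cont]) auto
  have "r \<in> S" using r unfolding S_def by auto
  then have neS: "S \<noteq> {}" by auto
  have bS: "bdd_below S" unfolding S_def by (rule bdd_belowI[of _ \<delta>]) auto
  define t where "t = Inf S"
  have tS: "t \<in> S" using closed_contains_Inf[OF neS bS clS] t_def by simp
  have below: "\<And>x. \<delta> \<le> x \<Longrightarrow> x < t \<Longrightarrow> v x < 0"
  proof -
    fix x assume x: "\<delta> \<le> x" "x < t"
    have "t \<le> r" using tS S_def by auto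
    show "v x < 0"
    proof (rule ccontr)
      assume "\<not> v x < 0"
      then have "x \<in> S" using x \<open>t \<le> r\<close> S_def by auto
      then have "t \<le> x" unfolding t_def using bS by (simp add: cInf_lower)
      then show False using x by simp
    qed
  qed
  have vt: "v t \<ge> 0" "t \<ge> \<delta>" using tS S_def by auto
  then have tgt: "t > \<delta>" using init by (cases "t = \<delta>") auto
  obtain z where z: "z \<in> {\<delta><..<t}" "v t - v \<delta> = v' z * (t - \<delta>)"
    using mvt_within[of \<delta> t "{\<delta>..}" v v'] tgt der by force
  obtain w where w: "w \<in> {\<delta><..<z}" "v' z - v' \<delta> = v'' w * (z - \<delta>)"
    using mvt_within[of \<delta> z "{\<delta>..}" v' v''] z der by force
  have "v w < 0" using below w z by auto
  then have "exp (v w) - 1 < 0" by simp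
  moreover have "v'' w = 2/(h w)^2 * (exp (v w) - 1)" using der w by auto
  ultimately have "v'' w < 0" using mult_pos_neg[OF coef_pos[OF hpos[of w]] \<open>exp (v w) - 1 < 0\<close>] by linarith
  then have "v' z < 0" using w init by (smt (verit) greaterThanLessThan_iff mult_neg_pos)
  then have "v t < v \<delta>" using z mult_neg_pos[of "v' z" "t - \<delta>"] tgt by auto
  then show False using vt init by simp
qed

lemma part_pos:
  fixes h :: "real \<Rightarrow> real"
  assumes hpos: "\<And>r. h r > 0"
    and der: "\<forall>r\<ge>\<delta>. (v has_real_derivative v' r) (at r within {\<delta>..}) \<and>
                (v' has_real_derivative v'' r) (at r within {\<delta>..}) \<and>
                v'' r = 2 / (h r)^2 * (exp (v r) - 1)"
    and init: "v \<delta> > 0" "v' \<delta> > 0"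
  shows "\<forall>r>\<delta>. v r > 0"
proof (intro allI impI, rule ccontr)
  fix r assume r: "r > \<delta>" "\<not> v r > 0"
  define S where "S = {\<delta>..r} \<inter> v -` {..0}"
  have cont: "continuous_on {\<delta>..r} v"
  proof (rule continuous_on_subset)
    show "continuous_on {\<delta>..} v"
      using der by (auto simp: continuous_on_eq_continuous_within intro: DERIV_continuous)
  qed auto
  have clS: "closed S" unfolding S_def by (rule continuous_closed_preimage[OF cont]) auto
  have "r \<in> S" using r unfolding S_def by auto
  then have neS: "S \<noteq> {}" by auto
  have bS: "bdd_below S" unfolding S_def by (rule bdd_belowI[of _ \<delta>]) auto
  define t where "t = Inf S"
  have tS: "t \<in> S" using closed_contains_Inf[OF neS bS clS] t_def by simp
  have below: "\<And>x. \<delta> \<le> x \<Longrightarrow> x < t \<Longrightarrow> v x > 0"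
  proof -
    fix x assume x: "\<delta> \<le> x" "x < t"
    have "t \<le> r" using tS S_def by auto
    show "v x > 0"
    proof (rule ccontr)
      assume "\<not> v x > 0"
      then have "x \<in> S" using x \<open>t \<le> r\<close> S_def by auto
      then have "t \<le> x" unfolding t_def using bS by (simp add: cInf_lower)
      then show False using x by simp
    qed
  qed
  have vt: "v t \<le> 0" "t \<ge> \<delta>" using tS S_def by auto
  then have tgt: "t > \<delta>" using init by (cases "t = \<delta>") auto
  obtain z where z: "z \<in> {\<delta><..<t}" "v t - v \<delta> = v' z * (t - \<delta>)"
    using mvt_within[of \<delta> t "{\<delta>..}" v v'] tgt der by force
  obtain w where w: "w \<in> {\<delta><..<z}" "v' z - v' \<delta> = v'' w * (z - \<delta>)"
    using mvt_within[of \<delta> z "{\<delta>..}" v' v''] z der by force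
  have "v w > 0" using below w z by auto
  then have "exp (v w) - 1 > 0" by simp
  moreover have "v'' w = 2/(h w)^2 * (exp (v w) - 1)" using der w by auto
  ultimately have "v'' w > 0" using mult_pos_pos[OF coef_pos[OF hpos[of w]] \<open>exp (v w) - 1 > 0\<close>] by linarith
  then have "v' z > 0" using w init by (smt (verit) greaterThanLessThan_iff mult_pos_pos)
  then have "v' z * (t - \<delta>) > 0" using tgt by simp
  then have "v t > v \<delta>" using z by simp
  then show False using vt init by simp
qed

theorem mainTheorem13:
  fixes h :: "real \<Rightarrow> real"
  assumes hpos: "\<And>r. h r > 0"
  shows
   "(\<forall>(U::real set) (v::real\<Rightarrow>real) v' v'' m.
        open U \<and>
        (\<forall>r\<in>U. (v has_real_derivative v' r) (at r) \<and>
                (v' has_real_derivative v'' r) (at r) \<and>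
                v'' r = 2 / (h r)^2 * (exp (v r) - 1)) \<and>
        m \<in> U \<and> v' m = 0 \<and>
        (\<exists>e>0. \<forall>x\<in>U. dist x m < e \<longrightarrow> v m \<le> v x)
        \<longrightarrow> v m \<ge> 0)
  \<and> (\<forall>(U::real set) (v::real\<Rightarrow>real) v' v'' M.
        open U \<and>
        (\<forall>r\<in>U. (v has_real_derivative v' r) (at r) \<and>
                (v' has_real_derivative v'' r) (at r) \<and>
                v'' r = 2 / (h r)^2 * (exp (v r) - 1)) \<and>
        M \<in> U \<and> v' M = 0 \<and>
        (\<exists>e>0. \<forall>x\<in>U. dist x M < e \<longrightarrow> v x \<le> v M)
        \<longrightarrow> v M \<le> 0)
  \<and> (\<forall>(\<delta>::real) (v::real\<Rightarrow>real) v' v''.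
        (\<forall>r\<ge>\<delta>. (v has_real_derivative v' r) (at r within {\<delta>..}) \<and>
                (v' has_real_derivative v'' r) (at r within {\<delta>..}) \<and>
                v'' r = 2 / (h r)^2 * (exp (v r) - 1))
        \<longrightarrow> ((v \<delta> < 0 \<and> v' \<delta> < 0 \<longrightarrow> (\<forall>r>\<delta>. v r < 0)) \<and>
             (v \<delta> > 0 \<and> v' \<delta> > 0 \<longrightarrow> (\<forall>r>\<delta>. v r > 0))))"

proof (intro conjI allI impI)
  fix U v v' v'' m
  assume a: "open U \<and>
        (\<forall>r\<in>U. (v has_real_derivative v' r) (at r) \<and>
                (v' has_real_derivative v'' r) (at r) \<and>
                v'' r = 2 / (h r)^2 * (exp (v r) - 1)) \<and>
        m \<in> U \<and> v' m = 0 \<and>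
        (\<exists>e>0. \<forall>x\<in>U. dist x m < e \<longrightarrow> v m \<le> v x)"
  then obtain e where e: "e > 0" "\<forall>x\<in>U. dist x m < e \<longrightarrow> v m \<le> v x" by blast
  from a have a1: "open U" and a2: "\<forall>r\<in>U. (v has_real_derivative v' r) (at r) \<and>
                (v' has_real_derivative v'' r) (at r) \<and>
                v'' r = 2 / (h r)^2 * (exp (v r) - 1)" and a3: "m \<in> U" and a4: "v' m = 0" by auto
  show "v m \<ge> 0" by (rule part_min[OF hpos a1 a2 a3 a4 e])
next
  fix U v v' v'' m
  assume a: "open U \<and>
        (\<forall>r\<in>U. (v has_real_derivative v' r) (at r) \<and>
                (v' has_real_derivative v'' r) (at r) \<and>
                v'' r = 2 / (h r)^2 * (exp (v r) - 1)) \<and>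
        m \<in> U \<and> v' m = 0 \<and>
        (\<exists>e>0. \<forall>x\<in>U. dist x m < e \<longrightarrow> v x \<le> v m)"
  then obtain e where e: "e > 0" "\<forall>x\<in>U. dist x m < e \<longrightarrow> v x \<le> v m" by blast
  from a have a1: "open U" and a2: "\<forall>r\<in>U. (v has_real_derivative v' r) (at r) \<and>
                (v' has_real_derivative v'' r) (at r) \<and>
                v'' r = 2 / (h r)^2 * (exp (v r) - 1)" and a3: "m \<in> U" and a4: "v' m = 0" by auto
  show "v m \<le> 0" by (rule part_max[OF hpos a1 a2 a3 a4 e])
next
  fix \<delta> v v' v'' r
  assume a: "\<forall>r\<ge>\<delta>. (v has_real_derivative v' r) (at r within {\<delta>..}) \<and>
                (v' has_real_derivative v'' r) (at r within {\<delta>..}) \<and>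
                v'' r = 2 / (h r)^2 * (exp (v r) - 1)"
  assume "v \<delta> < 0 \<and> v' \<delta> < 0"
  moreover assume "r > \<delta>"
  ultimately show "v r < 0" using part_neg[OF hpos a] by blast
next
  fix \<delta> v v' v'' r
  assume a: "\<forall>r\<ge>\<delta>. (v has_real_derivative v' r) (at r within {\<delta>..}) \<and>
                (v' has_real_derivative v'' r) (at r within {\<delta>..}) \<and>
                v'' r = 2 / (h r)^2 * (exp (v r) - 1)"
  assume "v \<delta> > 0 \<and> v' \<delta> > 0"
  moreover assume "r > \<delta>"
  ultimately show "v r > 0" using part_pos[OF hpos a] by blast
qed

end
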